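(* Let $R$ be a commutative noetherian local ring and let $M$ be a right bounded $R$-complex with $\operatorname{depth}_R M_i\ge \operatorname{depth}R$ for all $i$. If $\operatorname{depth}_R \mathrm{H}_i(M)\ge \operatorname{depth}R-1$ for all $i$, then $\operatorname{depth}_R \mathrm{Z}_i(M)\ge\operatorname{depth}R$ and $\operatorname{depth}_R\mathrm{B}_i(M)\ge\operatorname{depth}R$ for all $i$.
   Context: For an $R$-complex $M$ with differential $\partial$: $\mathrm{Z}_i(M)=\ker\partial_i$, $\mathrm{B}_i(M)=\operatorname{im}\partial_{i+1}$, $\mathrm{H}_i(M)=\mathrm{Z}_i(M)/\mathrm{B}_i(M)$. By convention the depth of the zero module is $+\infty$. *)

theory Defs
  imports Main "HOL-Library.Extended_Nat"
begin

definition ring_ideal :: "'a::comm_ring_1 set \<Rightarrow> bool" where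
  "ring_ideal I \<longleftrightarrow> module.subspace ((*) :: 'a \<Rightarrow> 'a \<Rightarrow> 'a) I"

definition ideal_gen :: "'a::comm_ring_1 list \<Rightarrow> 'a set" where
  "ideal_gen xs = module.span ((*) :: 'a \<Rightarrow> 'a \<Rightarrow> 'a) (set xs)"

definition noetherian_ring :: "'a::comm_ring_1 itself \<Rightarrow> bool" where
  "noetherian_ring _ \<longleftrightarrow> (\<forall>I :: 'a set. ring_ideal I \<longrightarrow> (\<exists>xs. I = ideal_gen xs))"

definition maximal_ideal :: "'a::comm_ring_1 set \<Rightarrow> bool" where
  "maximal_ideal m \<longleftrightarrow> ring_ideal m \<and> m \<noteq> UNIV \<and>
     (\<forall>J. ring_ideal J \<longrightarrow> m \<subseteq> J \<longrightarrow> J = m \<or> J = UNIV)"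

definition local_ring :: "'a::comm_ring_1 itself \<Rightarrow> bool" where
  "local_ring _ \<longleftrightarrow> (\<exists>!m :: 'a set. maximal_ideal m)"

definition the_max_ideal :: "'a::comm_ring_1 itself \<Rightarrow> 'a set" where
  "the_max_ideal _ = (THE m :: 'a set. maximal_ideal m)"

definition max_ideal_gens :: "'a::comm_ring_1 itself \<Rightarrow> 'a list" where
  "max_ideal_gens T = (SOME xs. ideal_gen xs = the_max_ideal T)"

text \<open>Chains in degree p: families indexed by p-element subsets of the index set {0..<n},
  with values in N (basis of the exterior power).\<close>
definition kos_chains :: "nat \<Rightarrow> 'm::ab_group_add set \<Rightarrow> nat \<Rightarrow> (nat set \<Rightarrow> 'm) set" where
  "kos_chains n N p = {f. (\<forall>S. f S \<in> N) \<and> (\<forall>S. (card S \<noteq> p \<or> \<not> S \<subseteq> {..<n}) \<longrightarrow> f S = 0)}"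

text \<open>Koszul differential: e_{j_1}\<and>...\<and>e_{j_p} \<mapsto> \<Sum>_k (-1)^(k+1) x_{j_k} e_{j_1}..(omit j_k)..e_{j_p}.\<close>
definition kos_d :: "('a::comm_ring_1 \<Rightarrow> 'm::ab_group_add \<Rightarrow> 'm) \<Rightarrow> 'a list \<Rightarrow> (nat set \<Rightarrow> 'm) \<Rightarrow> nat set \<Rightarrow> 'm" where
  "kos_d smult xs f T =
     (\<Sum>j \<in> {..<length xs} - T. smult ((-1) ^ card {i \<in> T. i < j} * xs ! j) (f (insert j T)))"

text \<open>H_p(x; N/L) \<noteq> 0 (chains of N/L represented by chains of N modulo chains of L).\<close>
definition kos_H_nonzero :: "('a::comm_ring_1 \<Rightarrow> 'm::ab_group_add \<Rightarrow> 'm) \<Rightarrow> 'a list \<Rightarrow> 'm set \<Rightarrow> 'm set \<Rightarrow> nat \<Rightarrow> bool" where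
  "kos_H_nonzero smult xs N L p \<longleftrightarrow>
     (\<exists>f \<in> kos_chains (length xs) N p.
        (\<forall>T. kos_d smult xs f T \<in> L) \<and>
        \<not> (\<exists>g \<in> kos_chains (length xs) N (Suc p). \<forall>S. f S - kos_d smult xs g S \<in> L))"

definition depth_quot :: "('a::comm_ring_1 \<Rightarrow> 'm::ab_group_add \<Rightarrow> 'm) \<Rightarrow> 'm set \<Rightarrow> 'm set \<Rightarrow> enat" where
  "depth_quot smult N L =
     (let xs = max_ideal_gens TYPE('a) in
      if \<forall>p. \<not> kos_H_nonzero smult xs N L p then \<infinity>
      else enat (length xs - Max {p. kos_H_nonzero smult xs N L p}))"

definition depth_mod :: "('a::comm_ring_1 \<Rightarrow> 'm::ab_group_add \<Rightarrow> 'm) \<Rightarrow> 'm set \<Rightarrow> enat" where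
  "depth_mod smult N = depth_quot smult N {0}"

definition depth_ring :: "'a::comm_ring_1 itself \<Rightarrow> enat" where
  "depth_ring _ = depth_mod ((*) :: 'a \<Rightarrow> 'a \<Rightarrow> 'a) UNIV"

definition is_complex :: "('a::comm_ring_1 \<Rightarrow> 'm::ab_group_add \<Rightarrow> 'm) \<Rightarrow> (int \<Rightarrow> 'm set) \<Rightarrow> (int \<Rightarrow> 'm \<Rightarrow> 'm) \<Rightarrow> bool" where
  "is_complex smult M d \<longleftrightarrow> module smult \<and>
     (\<forall>i. module.subspace smult (M i)) \<and>
     (\<forall>i. \<forall>x \<in> M i. d i x \<in> M (i - 1)) \<and>
     (\<forall>i. \<forall>x \<in> M i. \<forall>y \<in> M i. d i (x + y) = d i x + d i y) \<and>
     (\<forall>i a. \<forall>x \<in> M i. d i (smult a x) = smult a (d i x)) \<and>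
     (\<forall>i. \<forall>x \<in> M i. d (i - 1) (d i x) = 0)"

definition right_bounded :: "(int \<Rightarrow> 'm::zero set) \<Rightarrow> bool" where
  "right_bounded M \<longleftrightarrow> (\<exists>b. \<forall>i < b. M i = {0})"

definition cycles :: "(int \<Rightarrow> 'm::zero set) \<Rightarrow> (int \<Rightarrow> 'm \<Rightarrow> 'm) \<Rightarrow> int \<Rightarrow> 'm set" where
  "cycles M d i = {x \<in> M i. d i x = 0}"

definition boundaries :: "(int \<Rightarrow> 'm set) \<Rightarrow> (int \<Rightarrow> 'm \<Rightarrow> 'm) \<Rightarrow> int \<Rightarrow> 'm set" where
  "boundaries M d i = d (i + 1) ` M (i + 1)"

definition depth_homology :: "('a::comm_ring_1 \<Rightarrow> 'm::ab_group_add \<Rightarrow> 'm) \<Rightarrow> (int \<Rightarrow> 'm set) \<Rightarrow> (int \<Rightarrow> 'm \<Rightarrow> 'm) \<Rightarrow> int \<Rightarrow> enat" where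
  "depth_homology smult M d i = depth_quot smult (cycles M d i) (boundaries M d i)"

end

theory Submission
  imports Defs
begin

context module
begin

lemma kos_sign_ins_gt:
  assumes "a < b" "a \<notin> T"
  shows "card {i \<in> insert a T. i < b} = Suc (card {i \<in> T. i < (b::nat)})"
proof -
  have "{i \<in> insert a T. i < b} = insert a {i \<in> T. i < b}" using assms by auto
  moreover have "finite {i \<in> T. i < b}" by (rule finite_subset[of _ "{..<b}"]) auto
  ultimately show ?thesis using assms by simp
qed

lemma kos_sign_ins_lt:
  assumes "a < b"
  shows "{i \<in> insert b T. i < a} = {i \<in> T. i < (a::nat)}"
  using assms by auto

lemma kos_dd: "kos_d scale xs (kos_d scale xs f) T = 0"
proof -
  define n where "n = length xs"
  define U where "U = {..<n} - T"
  define e where "e A j = ((-1::'a) ^ card {i \<in> A. i < j})" for A :: "nat set" and j :: nat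
  define G where "G j k = scale (e T j * xs!j * (e (insert j T) k * xs!k)) (f (insert k (insert j T)))" for j k
  define Gt where "Gt j k = (if j < k then G j k else 0)" for j k
  have fin: "finite U" unfolding U_def by auto
  have anti: "G b a = - G a b" if "a < b" "a \<in> U" "b \<in> U" for a b
  proof -
    have "e (insert a T) b = - e T b"
      unfolding e_def using kos_sign_ins_gt[of a b T] that by (simp add: U_def)
    moreover have "e (insert b T) a = e T a"
      unfolding e_def using kos_sign_ins_lt[OF that(1)] by simp
    moreover have "insert a (insert b T) = insert b (insert a T)" by auto
    ultimately show ?thesis unfolding G_def
      by (simp add: scale_minus_left[symmetric] mult_ac del: scale_minus_left)
  qed
  have 1: "kos_d scale xs (kos_d scale xs f) T = (\<Sum>j\<in>U. \<Sum>k\<in>U. if k \<noteq> j then G j k else 0)"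
  proof -
    have "kos_d scale xs (kos_d scale xs f) T = (\<Sum>j\<in>U. \<Sum>k\<in>U - {j}. G j k)"
      unfolding kos_d_def n_def[symmetric] U_def[symmetric]
    proof (rule sum.cong[OF refl])
      fix j assume j: "j \<in> U"
      have "{..<n} - insert j T = U - {j}" unfolding U_def by auto
      then show "scale ((- 1) ^ card {i \<in> T. i < j} * xs ! j)
          (\<Sum>ja\<in>{..<n} - insert j T. scale ((- 1) ^ card {i \<in> insert j T. i < ja} * xs ! ja) (f (insert ja (insert j T)))) =
         (\<Sum>k\<in>U - {j}. G j k)"
        by (simp add: scale_sum_right G_def e_def)
    qed
    also have "\<dots> = (\<Sum>j\<in>U. \<Sum>k\<in>U. if k \<noteq> j then G j k else 0)"
    proof (rule sum.cong[OF refl])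
      fix j assume "j \<in> U"
      have "U - {j} = {k \<in> U. k \<noteq> j}" by auto
      then show "(\<Sum>k\<in>U - {j}. G j k) = (\<Sum>k\<in>U. if k \<noteq> j then G j k else 0)"
        using sum.inter_filter[OF fin, of "G j" "\<lambda>k. k \<noteq> j"] by simp
    qed
    finally show ?thesis .
  qed
  have 2: "(if k \<noteq> j then G j k else 0) = Gt j k - Gt k j" if "j \<in> U" "k \<in> U" for j k
  proof (cases "j < k")
    case True then show ?thesis unfolding Gt_def by simp
  next
    case False
    show ?thesis
    proof (cases "k < j")
      case True then show ?thesis unfolding Gt_def using anti[OF True that(2,1)] by simp
    next
      case False2: False
      with False have "j = k" by simp
      then show ?thesis unfolding Gt_def by simp
    qed
  qed
  have "(\<Sum>j\<in>U. \<Sum>k\<in>U. if k \<noteq> j then G j k else 0) = (\<Sum>j\<in>U. \<Sum>k\<in>U. Gt j k - Gt k j)"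
    using 2 by (intro sum.cong refl) auto
  also have "\<dots> = (\<Sum>j\<in>U. \<Sum>k\<in>U. Gt j k) - (\<Sum>j\<in>U. \<Sum>k\<in>U. Gt k j)"
    by (simp add: sum_subtractf)
  also have "(\<Sum>j\<in>U. \<Sum>k\<in>U. Gt k j) = (\<Sum>j\<in>U. \<Sum>k\<in>U. Gt j k)"
    by (rule sum.swap)
  finally show ?thesis using 1 by simp
qed

lemma kos_d_diff: "kos_d scale xs (\<lambda>S. a S - b S) T = kos_d scale xs a T - kos_d scale xs b T"
  unfolding kos_d_def by (simp add: scale_right_diff_distrib sum_subtractf)

lemma kos_d_zero: "kos_d scale xs (\<lambda>S. 0) T = 0"
  unfolding kos_d_def by simp

lemma kos_d_chains:
  assumes N: "subspace N" and f: "f \<in> kos_chains (length xs) N (Suc p)"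
  shows "kos_d scale xs f \<in> kos_chains (length xs) N p"
  unfolding kos_chains_def
proof (intro CollectI conjI allI impI)
  fix S
  show "kos_d scale xs f S \<in> N" unfolding kos_d_def
    using f N by (intro subspace_sum) (auto simp: kos_chains_def intro!: subspace_scale)
next
  fix S assume S: "card S \<noteq> p \<or> \<not> S \<subseteq> {..<length xs}"
  have "f (insert j S) = 0" if "j \<in> {..<length xs} - S" for j
  proof -
    have "card (insert j S) \<noteq> Suc p \<or> \<not> insert j S \<subseteq> {..<length xs}"
    proof (cases "finite S")
      case True then show ?thesis using S that by auto
    next
      case False then show ?thesis using finite_subset[of S "{..<length xs}"] by auto
    qed
    then show ?thesis using f by (auto simp: kos_chains_def)
  qed
  then show "kos_d scale xs f S = 0" unfolding kos_d_def by simp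
qed

lemma phi_sum:
  fixes \<phi> :: "'b \<Rightarrow> 'b"
  assumes N: "subspace N" and add: "\<forall>x\<in>N. \<forall>y\<in>N. \<phi> (x + y) = \<phi> x + \<phi> y"
    and g: "\<forall>x\<in>A. g x \<in> N" and fin: "finite A"
  shows "\<phi> (sum g A) = (\<Sum>x\<in>A. \<phi> (g x))"
  using fin g
proof (induction A rule: finite_induct)
  case empty
  have "\<phi> 0 = \<phi> 0 + \<phi> 0" using add subspace_0[OF N] by (metis add_0)
  then have "\<phi> 0 = 0" using add_cancel_right_right[of "\<phi> 0" "\<phi> 0"] by blast
  then show ?case by simp
next
  case (insert a A)
  have "sum g A \<in> N" using insert N by (intro subspace_sum) auto
  then show ?case using insert add by simp
qed

lemma kos_d_phi:
  assumes N: "subspace N" and add: "\<forall>x\<in>N. \<forall>y\<in>N. \<phi> (x + y) = \<phi> x + \<phi> y"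
    and sc: "\<forall>a. \<forall>x\<in>N. \<phi> (scale a x) = scale a (\<phi> x)"
    and h: "\<forall>S. h S \<in> N"
  shows "\<phi> (kos_d scale xs h T) = kos_d scale xs (\<lambda>S. \<phi> (h S)) T"
  unfolding kos_d_def
  using h sc by (subst phi_sum[OF N add]) (auto intro!: subspace_scale N)

lemma kos_H_le:
  assumes "0 \<in> L" and H: "kos_H_nonzero scale xs N L p"
  shows "p \<le> length xs"
proof (rule ccontr)
  assume p: "\<not> p \<le> length xs"
  from H obtain f where f: "f \<in> kos_chains (length xs) N p"
    and nf: "\<not> (\<exists>g \<in> kos_chains (length xs) N (Suc p). \<forall>S. f S - kos_d scale xs g S \<in> L)"
    unfolding kos_H_nonzero_def by blast
  have "f S = 0" for S
  proof -
    have "card S \<noteq> p \<or> \<not> S \<subseteq> {..<length xs}"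
      using card_mono[of "{..<length xs}" S] p by auto
    then show ?thesis using f by (auto simp: kos_chains_def)
  qed
  moreover have "0 \<in> N"
  proof -
    have "\<not> (UNIV::nat set) \<subseteq> {..<length xs}" by auto
    then have "f UNIV = 0" using f unfolding kos_chains_def by blast
    moreover have "f UNIV \<in> N" using f unfolding kos_chains_def by blast
    ultimately show ?thesis by simp
  qed
  then have "(\<lambda>S. 0) \<in> kos_chains (length xs) N (Suc p)" by (auto simp: kos_chains_def)
  moreover have "\<forall>S. f S - kos_d scale xs (\<lambda>S. 0) S \<in> L"
    using calculation(1) assms(1) by (simp add: kos_d_zero)
  ultimately show False using nf by blast
qed

lemma kos_H_zero_mod:
  assumes "0 \<in> L"
  shows "\<not> kos_H_nonzero scale xs {0} L p"
proof
  assume H: "kos_H_nonzero scale xs {0} L p"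
  from H obtain f where f: "f \<in> kos_chains (length xs) {0} p"
    and nf: "\<not> (\<exists>g \<in> kos_chains (length xs) {0} (Suc p). \<forall>S. f S - kos_d scale xs g S \<in> L)"
    unfolding kos_H_nonzero_def by blast
  have "f S = 0" for S using f by (auto simp: kos_chains_def)
  moreover have "(\<lambda>S. 0) \<in> kos_chains (length xs) {0} (Suc p)" by (auto simp: kos_chains_def)
  moreover have "\<forall>S. f S - kos_d scale xs (\<lambda>S. 0) S \<in> L"
    using calculation(1) assms(1) by (simp add: kos_d_zero)
  ultimately show False using nf by blast
qed

lemma depth_ge_iff:
  assumes L0: "0 \<in> L"
  shows "t \<le> depth_quot scale N L \<longleftrightarrow>
    (\<forall>p. kos_H_nonzero scale (max_ideal_gens TYPE('a)) N L p \<longrightarrow>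
       t \<le> enat (length (max_ideal_gens TYPE('a)) - p))"
proof -
  define xs where "xs = max_ideal_gens TYPE('a)"
  define P where "P = {p. kos_H_nonzero scale xs N L p}"
  have fin: "finite P"
    by (rule finite_subset[of _ "{..length xs}"]) (auto simp: P_def intro: kos_H_le[OF L0])
  show ?thesis
  proof (cases "P = {}")
    case True
    then have "depth_quot scale N L = \<infinity>" unfolding depth_quot_def xs_def[symmetric] P_def by auto
    then show ?thesis using True unfolding P_def xs_def by auto
  next
    case False
    then have D: "depth_quot scale N L = enat (length xs - Max P)"
      unfolding depth_quot_def xs_def[symmetric] P_def by auto
    have M: "Max P \<in> P" using fin False by simp
    show ?thesis
    proof
      assume t: "t \<le> depth_quot scale N L"
      show "\<forall>p. kos_H_nonzero scale (max_ideal_gens TYPE('a)) N L p \<longrightarrow>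
         t \<le> enat (length (max_ideal_gens TYPE('a)) - p)"
      proof (intro allI impI)
        fix p assume "kos_H_nonzero scale (max_ideal_gens TYPE('a)) N L p"
        then have "p \<in> P" unfolding P_def xs_def by simp
        then have "p \<le> Max P" using fin by simp
        then have "enat (length xs - Max P) \<le> enat (length xs - p)" by simp
        moreover have "t \<le> enat (length xs - Max P)" using t D by simp
        ultimately show "t \<le> enat (length (max_ideal_gens TYPE('a)) - p)" unfolding xs_def
          by (metis order_trans)
      qed
    next
      assume "\<forall>p. kos_H_nonzero scale (max_ideal_gens TYPE('a)) N L p \<longrightarrow>
         t \<le> enat (length (max_ideal_gens TYPE('a)) - p)"
      then show "t \<le> depth_quot scale N L" using M D unfolding P_def xs_def by auto
    qed
  qed
qed

lemma chase:
  assumes N: "subspace N" and add: "\<forall>x\<in>N. \<forall>y\<in>N. \<phi> (x + y) = \<phi> x + \<phi> y"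
    and sc: "\<forall>a. \<forall>x\<in>N. \<phi> (scale a x) = scale a (\<phi> x)"
    and nB: "\<not> kos_H_nonzero scale xs N {0} p"
    and nC: "\<not> kos_H_nonzero scale xs (\<phi> ` N) L (Suc p)"
  shows "\<not> kos_H_nonzero scale xs {x \<in> N. \<phi> x \<in> L} {0} p"
proof
  define n where "n = length xs"
  define K where "K = {x \<in> N. \<phi> x \<in> L}"
  assume "kos_H_nonzero scale xs {x \<in> N. \<phi> x \<in> L} {0} p"
  then obtain f where f: "f \<in> kos_chains n K p" "\<forall>T. kos_d scale xs f T \<in> {0}"
    and nf: "\<not> (\<exists>g \<in> kos_chains n K (Suc p). \<forall>S. f S - kos_d scale xs g S \<in> {0})"
    unfolding kos_H_nonzero_def K_def n_def by blast
  have fN: "f \<in> kos_chains n N p" using f(1) by (auto simp: kos_chains_def K_def)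
  from nB fN f(2) obtain h where h: "h \<in> kos_chains n N (Suc p)" "\<forall>S. f S - kos_d scale xs h S \<in> {0}"
    unfolding kos_H_nonzero_def n_def by blast
  have hN: "\<forall>S. h S \<in> N" using h(1) by (auto simp: kos_chains_def)
  have N0: "0 \<in> N" using subspace_0[OF N] .
  have phi0: "\<phi> 0 = 0"
  proof -
    have "\<phi> 0 = \<phi> 0 + \<phi> 0" using add N0 by (metis add_0)
    then show ?thesis using add_cancel_right_right[of "\<phi> 0" "\<phi> 0"] by blast
  qed
  have phidiff: "\<phi> (x - y) = \<phi> x - \<phi> y" if "x \<in> N" "y \<in> N" for x y
  proof -
    have "x - y \<in> N" using subspace_diff[OF N that] .
    then have "\<phi> x = \<phi> (x - y) + \<phi> y" using add that by (metis diff_add_cancel)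
    then show ?thesis by simp
  qed
  have hC: "(\<lambda>S. \<phi> (h S)) \<in> kos_chains n (\<phi> ` N) (Suc p)"
    using h(1) phi0 unfolding kos_chains_def by auto
  have "\<forall>T. kos_d scale xs (\<lambda>S. \<phi> (h S)) T \<in> L"
  proof
    fix T
    have "kos_d scale xs (\<lambda>S. \<phi> (h S)) T = \<phi> (kos_d scale xs h T)"
      using kos_d_phi[OF N add sc hN] by simp
    also have "kos_d scale xs h T = f T" using h(2) by auto
    finally show "kos_d scale xs (\<lambda>S. \<phi> (h S)) T \<in> L"
      using f(1) by (auto simp: kos_chains_def K_def)
  qed
  with nC hC obtain k where k: "k \<in> kos_chains n (\<phi> ` N) (Suc (Suc p))"
    "\<forall>S. \<phi> (h S) - kos_d scale xs k S \<in> L"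
    unfolding kos_H_nonzero_def n_def by blast
  define k' where "k' S = (if k S = 0 then 0 else (SOME y. y \<in> N \<and> \<phi> y = k S))" for S
  have k'1: "k' S \<in> N \<and> \<phi> (k' S) = k S" for S
  proof (cases "k S = 0")
    case True then show ?thesis using N0 phi0 by (simp add: k'_def)
  next
    case False
    have "k S \<in> \<phi> ` N" using k(1) by (auto simp: kos_chains_def)
    then obtain y where "y \<in> N" "\<phi> y = k S" by (auto simp: image_iff)
    then have "\<exists>y. y \<in> N \<and> \<phi> y = k S" by blast
    from someI_ex[OF this] show ?thesis using False by (simp add: k'_def)
  qed
  have k'C: "k' \<in> kos_chains n N (Suc (Suc p))"
    using k(1) k'1 unfolding kos_chains_def by (auto simp: k'_def)
  have dk': "kos_d scale xs k' \<in> kos_chains n N (Suc p)"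
    using kos_d_chains[OF N] k'C n_def by simp
  have phik': "(\<lambda>S. \<phi> (k' S)) = k" using k'1 by auto
  define g where "g S = h S - kos_d scale xs k' S" for S
  have gK: "g \<in> kos_chains n K (Suc p)"
    unfolding kos_chains_def
  proof (intro CollectI conjI allI impI)
    fix S
    have a: "h S \<in> N" "kos_d scale xs k' S \<in> N" using hN dk' by (auto simp: kos_chains_def)
    have "\<phi> (g S) = \<phi> (h S) - \<phi> (kos_d scale xs k' S)" unfolding g_def using phidiff a by simp
    also have "\<phi> (kos_d scale xs k' S) = kos_d scale xs k S"
      using kos_d_phi[OF N add sc, of k'] k'1 phik' by simp
    finally show "g S \<in> K" using k(2) a subspace_diff[OF N a] unfolding K_def g_def by auto
  next
    fix S assume "card S \<noteq> Suc p \<or> \<not> S \<subseteq> {..<n}"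
    then show "g S = 0" using h(1) dk' unfolding g_def kos_chains_def by auto
  qed
  have "\<forall>S. f S - kos_d scale xs g S \<in> {0}"
  proof
    fix S
    have "kos_d scale xs g S = kos_d scale xs h S - kos_d scale xs (kos_d scale xs k') S"
      unfolding g_def by (rule kos_d_diff)
    then show "f S - kos_d scale xs g S \<in> {0}" using h(2) kos_dd by simp
  qed
  with nf gK show False by blast
qed

lemma depth_lemma:
  assumes N: "subspace N" and add: "\<forall>x\<in>N. \<forall>y\<in>N. \<phi> (x + y) = \<phi> x + \<phi> y"
    and sc: "\<forall>a. \<forall>x\<in>N. \<phi> (scale a x) = scale a (\<phi> x)"
    and L0: "0 \<in> L" and hB: "t \<le> depth_mod scale N"
    and hC: "t - 1 \<le> depth_quot scale (\<phi> ` N) L"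
  shows "t \<le> depth_mod scale {x \<in> N. \<phi> x \<in> L}"
proof -
  define xs where "xs = max_ideal_gens TYPE('a)"
  have z: "(0::'b) \<in> {0}" by simp
  have B: "\<forall>p. kos_H_nonzero scale xs N {0} p \<longrightarrow> t \<le> enat (length xs - p)"
    using hB depth_ge_iff[OF z] unfolding depth_mod_def xs_def by blast
  have C: "\<forall>p. kos_H_nonzero scale xs (\<phi> ` N) L p \<longrightarrow> t - 1 \<le> enat (length xs - p)"
    using hC depth_ge_iff[OF L0] unfolding xs_def by blast
  show ?thesis unfolding depth_mod_def
    unfolding depth_ge_iff[OF z] xs_def[symmetric]
  proof (intro allI impI)
    fix p assume HK: "kos_H_nonzero scale xs {x \<in> N. \<phi> x \<in> L} {0} p"
    have "kos_H_nonzero scale xs N {0} p \<or> kos_H_nonzero scale xs (\<phi> ` N) L (Suc p)"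
      using chase[OF N add sc, of xs p L] HK by blast
    then show "t \<le> enat (length xs - p)"
    proof
      assume "kos_H_nonzero scale xs N {0} p" then show ?thesis using B by blast
    next
      assume H: "kos_H_nonzero scale xs (\<phi> ` N) L (Suc p)"
      have le: "Suc p \<le> length xs" using kos_H_le[OF L0 H] .
      have c: "t - 1 \<le> enat (length xs - Suc p)" using C H by blast
      show ?thesis
      proof (cases t)
        case (enat m)
        then have "m - 1 \<le> length xs - Suc p" using c by (simp add: one_enat_def)
        then show ?thesis using enat le by simp
      next
        case infinity then show ?thesis using c by simp
      qed
    qed
  qed
qed

end

theorem lemma3p8:
  fixes smult :: "'a::comm_ring_1 \<Rightarrow> 'm::ab_group_add \<Rightarrow> 'm"
    and M :: "int \<Rightarrow> 'm set" and d :: "int \<Rightarrow> 'm \<Rightarrow> 'm"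
  assumes "noetherian_ring TYPE('a)"
    and "local_ring TYPE('a)"
    and "is_complex smult M d"
    and "right_bounded M"
    and "\<forall>i. depth_mod smult (M i) \<ge> depth_ring TYPE('a)"
    and "\<forall>i. depth_homology smult M d i \<ge> depth_ring TYPE('a) - 1"
  shows "\<forall>i. depth_mod smult (cycles M d i) \<ge> depth_ring TYPE('a) \<and>
             depth_mod smult (boundaries M d i) \<ge> depth_ring TYPE('a)"
proof -
  have cx: "module smult" "\<forall>i. module.subspace smult (M i)"
    "\<forall>i. \<forall>x \<in> M i. d i x \<in> M (i - 1)"
    "\<forall>i. \<forall>x \<in> M i. \<forall>y \<in> M i. d i (x + y) = d i x + d i y"
    "\<forall>i a. \<forall>x \<in> M i. d i (smult a x) = smult a (d i x)"
    "\<forall>i. \<forall>x \<in> M i. d (i - 1) (d i x) = 0"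
    using assms(3) unfolding is_complex_def by auto
  interpret module smult by (rule cx(1))
  define t where "t = depth_ring TYPE('a)"
  have Msub: "subspace (M i)" for i using cx(2) by auto
  have d0: "d i 0 = 0" for i
  proof -
    have "d i 0 = d i 0 + d i 0" using cx(4) subspace_0[OF Msub] by (metis add_0)
    then show ?thesis using add_cancel_right_right[of "d i 0" "d i 0"] by blast
  qed
  have Zsub: "subspace (cycles M d i)" for i
    unfolding cycles_def
    by (rule subspaceI) (auto simp: d0 cx(4,5) subspace_0[OF Msub] subspace_add[OF Msub] subspace_scale[OF Msub])
  have BZ: "boundaries M d i \<subseteq> cycles M d i" for i
  proof
    fix z assume "z \<in> boundaries M d i"
    then obtain y where y: "y \<in> M (i + 1)" "z = d (i + 1) y" unfolding boundaries_def by auto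
    have "d (i + 1) y \<in> M (i + 1 - 1)" using cx(3) y(1) by blast
    moreover have "d (i + 1 - 1) (d (i + 1) y) = 0" using cx(6) y(1) by blast
    ultimately show "z \<in> cycles M d i" using y(2) unfolding cycles_def by simp
  qed
  have tle: "t - 1 \<le> t" by (cases t) (auto simp: one_enat_def)
  have step1: "t \<le> depth_mod smult (cycles M d i)"
    if h: "t \<le> depth_mod smult (boundaries M d (i - 1))" for i
  proof -
    have e1: "d i ` M i = boundaries M d (i - 1)" unfolding boundaries_def by simp
    have e2: "{x \<in> M i. d i x \<in> {0}} = cycles M d i" unfolding cycles_def by auto
    have "t - 1 \<le> depth_quot smult (d i ` M i) {0}"
      using h tle e1 unfolding depth_mod_def by simp
    from depth_lemma[OF Msub[of i], of "d i" "{0}" t, OF _ _ _ _ this]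
    show ?thesis using cx(4,5) assms(5) e2 unfolding t_def by auto
  qed
  have step2: "t \<le> depth_mod smult (boundaries M d i)"
    if h: "t \<le> depth_mod smult (cycles M d i)" for i
  proof -
    have e2: "{x \<in> cycles M d i. x \<in> boundaries M d i} = boundaries M d i" using BZ by auto
    have "0 \<in> boundaries M d i"
      unfolding boundaries_def using d0 subspace_0[OF Msub] by (metis image_eqI)
    moreover have "t - 1 \<le> depth_quot smult ((\<lambda>x. x) ` cycles M d i) (boundaries M d i)"
      using assms(6) unfolding depth_homology_def t_def by simp
    ultimately have "t \<le> depth_mod smult {x \<in> cycles M d i. x \<in> boundaries M d i}"
      using depth_lemma[OF Zsub[of i], of "\<lambda>x. x" "boundaries M d i" t] h by simp
    then show ?thesis using e2 by simp
  qed
  from assms(4) obtain b where b: "\<forall>i < b. M i = {0}" unfolding right_bounded_def by auto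
  have base0: "t \<le> depth_mod smult (boundaries M d i)" if "i + 1 < b" for i
  proof -
    have "boundaries M d i = {0}" unfolding boundaries_def using b that d0 by simp
    moreover have "(0::'m) \<in> {0}" by simp
    ultimately show ?thesis unfolding depth_mod_def
      using depth_ge_iff kos_H_zero_mod by simp
  qed
  have Ball: "t \<le> depth_mod smult (boundaries M d i)" for i
  proof (cases "i + 1 < b")
    case True then show ?thesis by (rule base0)
  next
    case False
    then have "b - 2 \<le> i" by simp
    then show ?thesis
    proof (induction i rule: int_ge_induct)
      case base then show ?case using base0[of "b - 2"] by simp
    next
      case (step j)
      have "t \<le> depth_mod smult (boundaries M d (j + 1 - 1))" using step.IH by simp
      then have "t \<le> depth_mod smult (cycles M d (j + 1))" by (rule step1)
      then show ?case by (rule step2)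
    qed
  qed
  show ?thesis
  proof
    fix i
    have "t \<le> depth_mod smult (cycles M d i)" by (rule step1[OF Ball[of "i - 1"]])
    then show "depth_ring TYPE('a) \<le> depth_mod smult (cycles M d i) \<and>
        depth_ring TYPE('a) \<le> depth_mod smult (boundaries M d i)"
      using Ball[of i] unfolding t_def by simp
  qed
qed

end
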